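(* Let $M\in\mathbb{N}$, $N\ge0$, and let $\mathcal{G}=(\mathcal{V},\mathcal{E})$ be a countable connected graph of bounded maximal degree. Then $A_N\le 2MV_N$ as operators on $\ell^2(\mathfrak{M}_N)$. Moreover, for any $\mathcal{V}'\subset\mathfrak{M}_N$, letting $A_N'$ be the weighted adjacency operator on the subgraph of $\mathcal{G}^{M,N}$ induced by $\mathcal{V}'$ (i.e. $(A_N'f)(\mathfrak{m})=\sum_{\mathfrak{n}\in\mathcal{V}',\,\mathfrak{n}\sim\mathfrak{m}}w(\mathfrak{m},\mathfrak{n})f(\mathfrak{n})$ for $f\in\ell^2(\mathcal{V}')$, $\mathfrak{m}\in\mathcal{V}'$), we have $A_N'\le 2MV_N\restriction_{\ell^2(\mathcal{V}')}$.
   Context: $\mathfrak{M}_N$ is the set of finitely supported functions $\mathfrak{m}:\mathcal{V}\to\{0,1,\dots,M\}$ with $\sum_x\mathfrak{m}(x)=N$. The graph $\mathcal{G}^{M,N}$ has vertex set $\mathfrak{M}_N$, with $\mathfrak{m}\sim\mathfrak{n}$ iff there is an edge $\{x_+,x_-\}\in\mathcal{E}$ with $\mathfrak{m}(x_\pm)=\mathfrak{n}(x_\pm)\pm1$ and $\mathfrak{m}(z)=\mathfrak{n}(z)$ for all other $z$. For $\mathfrak{m}\sim\mathfrak{n}$, $w(\mathfrak{m},\mathfrak{n})=\prod_{x:\mathfrak{m}(x)\neq\mathfrak{n}(x)}\big(\frac{M}{2}(\mathfrak{m}(x)+\mathfrak{n}(x)+1)-\mathfrak{m}(x)\mathfrak{n}(x)\big)^{1/2}$.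 $(A_Nf)(\mathfrak{m})=\sum_{\mathfrak{n}\sim\mathfrak{m}}w(\mathfrak{m},\mathfrak{n})f(\mathfrak{n})$ and $V_N$ is multiplication by $V_N(\mathfrak{m})=\sum_{\{x,y\}\in\mathcal{E}}\big(\frac{M}{2}(\mathfrak{m}(x)+\mathfrak{m}(y))-\mathfrak{m}(x)\mathfrak{m}(y)\big)$. *)

theory Defs
  imports "HOL-Analysis.Analysis" "HOL-Library.Complex_Order"
begin

definition simple_graph :: "'v set set \<Rightarrow> bool" where
  "simple_graph Ed \<longleftrightarrow> (\<forall>e\<in>Ed. card e = 2)"

definition graph_connected :: "'v set set \<Rightarrow> bool" where
  "graph_connected Ed \<longleftrightarrow> (\<forall>x y. (x, y) \<in> {(a, b). {a, b} \<in> Ed}\<^sup>*)"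

definition bounded_degree :: "'v set set \<Rightarrow> bool" where
  "bounded_degree Ed \<longleftrightarrow> (\<exists>D::nat. \<forall>x. finite {e\<in>Ed. x \<in> e} \<and> card {e\<in>Ed. x \<in> e} \<le> D)"

definition configs :: "nat \<Rightarrow> nat \<Rightarrow> ('v \<Rightarrow> nat) set" where
  "configs M N = {m. finite {x. m x \<noteq> 0} \<and> (\<forall>x. m x \<le> M) \<and> (\<Sum>x\<in>{x. m x \<noteq> 0}. m x) = N}"

definition cadj :: "'v set set \<Rightarrow> ('v \<Rightarrow> nat) \<Rightarrow> ('v \<Rightarrow> nat) \<Rightarrow> bool" where
  "cadj Ed m n \<longleftrightarrow> (\<exists>xp xm. {xp, xm} \<in> Ed \<and> m xp = n xp + 1 \<and> m xm + 1 = n xm \<and>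
      (\<forall>z. z \<noteq> xp \<and> z \<noteq> xm \<longrightarrow> m z = n z))"

definition weight :: "nat \<Rightarrow> ('v \<Rightarrow> nat) \<Rightarrow> ('v \<Rightarrow> nat) \<Rightarrow> real" where
  "weight M m n = (\<Prod>x\<in>{x. m x \<noteq> n x}.
      sqrt (real M / 2 * (real (m x) + real (n x) + 1) - real (m x) * real (n x)))"

text \<open>Weighted adjacency operator on the subgraph induced by \<open>V'\<close>
  (for \<open>V' = configs M N\<close> this is \<open>A_N\<close>).\<close>

definition adj_op :: "'v set set \<Rightarrow> nat \<Rightarrow> ('v \<Rightarrow> nat) set \<Rightarrow> (('v \<Rightarrow> nat) \<Rightarrow> complex)
    \<Rightarrow> ('v \<Rightarrow> nat) \<Rightarrow> complex" where
  "adj_op Ed M V' f m = (\<Sum>\<^sub>\<infinity>n\<in>{n\<in>V'. cadj Ed n m}. complex_of_real (weight M m n) * f n)"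

definition potential :: "'v set set \<Rightarrow> nat \<Rightarrow> ('v \<Rightarrow> nat) \<Rightarrow> real" where
  "potential Ed M m = (\<Sum>\<^sub>\<infinity>e\<in>Ed. real M / 2 * (\<Sum>x\<in>e. real (m x)) - (\<Prod>x\<in>e. real (m x)))"

definition l2_on :: "('v \<Rightarrow> nat) set \<Rightarrow> (('v \<Rightarrow> nat) \<Rightarrow> complex) \<Rightarrow> bool" where
  "l2_on V' f \<longleftrightarrow> (\<lambda>m. (cmod (f m))\<^sup>2) summable_on V'"

text \<open>Operator inequality \<open>A' \<le> 2M V\<restriction>V'\<close> in the form sense on \<open>\<ell>^2(V')\<close>
  (complex order: both sides real and compared).\<close>

definition form_ineq :: "'v set set \<Rightarrow> nat \<Rightarrow> ('v \<Rightarrow> nat) set \<Rightarrow> bool" where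
  "form_ineq Ed M V' \<longleftrightarrow> (\<forall>f. l2_on V' f \<longrightarrow>
     (\<Sum>\<^sub>\<infinity>m\<in>V'. cnj (f m) * adj_op Ed M V' f m)
       \<le> complex_of_real (2 * real M) *
         (\<Sum>\<^sub>\<infinity>m\<in>V'. complex_of_real (potential Ed M m) * cnj (f m) * f m))"

end

theory Submission
  imports Defs
begin


definition supp :: "('v \<Rightarrow> nat) \<Rightarrow> 'v set" where "supp m = {x. m x \<noteq> 0}"
definition Em :: "'v set set \<Rightarrow> ('v \<Rightarrow> nat) \<Rightarrow> 'v set set" where
  "Em Ed m = {e\<in>Ed. \<exists>x\<in>e. m x \<noteq> 0}"
definition ordp :: "'v set \<Rightarrow> ('v \<times> 'v) set" where
  "ordp e = {(x,y). x\<in>e \<and> y\<in>e \<and> x\<noteq>y}"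
definition mv :: "('v \<Rightarrow> nat) \<Rightarrow> 'v \<Rightarrow> 'v \<Rightarrow> ('v \<Rightarrow> nat)" where
  "mv m xp xm = m(xp := Suc (m xp), xm := m xm - 1)"
definition eterm :: "nat \<Rightarrow> ('v \<Rightarrow> nat) \<Rightarrow> 'v set \<Rightarrow> real" where
  "eterm M m e = real M / 2 * (\<Sum>x\<in>e. real (m x)) - (\<Prod>x\<in>e. real (m x))"

lemma card_supp:
  assumes "m \<in> configs M N"
  shows "finite (supp m) \<and> card (supp m) \<le> N"
proof -
  have f: "finite (supp m)" using assms by (simp add: configs_def supp_def)
  have "card (supp m) = (\<Sum>x\<in>supp m. 1)" by simp
  also have "\<dots> \<le> (\<Sum>x\<in>supp m. m x)" by (rule sum_mono) (auto simp: supp_def)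
  also have "\<dots> = N" using assms by (simp add: configs_def supp_def)
  finally show ?thesis using f by simp
qed

lemma Em_bound:
  assumes "bounded_degree Ed"
  obtains D where "\<And>m. m \<in> configs M N \<Longrightarrow> finite (Em Ed m) \<and> card (Em Ed m) \<le> N * D"
proof -
  obtain D where D: "\<And>x. finite {e\<in>Ed. x \<in> e} \<and> card {e\<in>Ed. x \<in> e} \<le> D"
    using assms unfolding bounded_degree_def by blast
  have "finite (Em Ed m) \<and> card (Em Ed m) \<le> N * D" if m: "m \<in> configs M N" for m
  proof -
    have eq: "Em Ed m = (\<Union>x\<in>supp m. {e\<in>Ed. x \<in> e})"
      by (auto simp: Em_def supp_def)
    have fs: "finite (supp m)" "card (supp m) \<le> N" using card_supp[OF m] by auto
    have "finite (Em Ed m)" unfolding eq using fs D by auto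
    moreover have "card (Em Ed m) \<le> (\<Sum>x\<in>supp m. card {e\<in>Ed. x \<in> e})"
      unfolding eq by (rule card_UN_le[OF fs(1)])
    moreover have "(\<Sum>x\<in>supp m. card {e\<in>Ed. x \<in> e}) \<le> (\<Sum>x\<in>supp m. D)"
      by (rule sum_mono) (use D in auto)
    moreover have "(\<Sum>x\<in>supp m. D) \<le> N * D" using fs by simp
    ultimately show ?thesis by linarith
  qed
  then show ?thesis using that by blast
qed

lemma edge2:
  assumes "simple_graph Ed" "e \<in> Ed"
  obtains a b where "a \<noteq> b" "e = {a, b}"
  using assms unfolding simple_graph_def by (meson card_2_iff)

lemma eterm_pair:
  assumes "a \<noteq> b"
  shows "eterm M m {a,b} = real M / 2 * (real (m a) + real (m b)) - real (m a) * real (m b)"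
  using assms by (simp add: eterm_def)

lemma eterm_bounds:
  assumes "simple_graph Ed" "e \<in> Ed" "\<forall>x. m x \<le> M"
  shows "0 \<le> eterm M m e \<and> eterm M m e \<le> real M ^ 2"
proof -
  obtain a b where ab: "a \<noteq> b" "e = {a,b}" using edge2[OF assms(1,2)] .
  have ma: "real (m a) \<le> M" "real (m b) \<le> M" using assms(3) by auto
  define p where "p = real (m a)"
  define q where "q = real (m b)"
  have pq: "0 \<le> p" "p \<le> M" "0 \<le> q" "q \<le> M" using ma by (auto simp: p_def q_def)
  have e: "eterm M m e = (p * (M - q) + q * (M - p)) / 2"
    using ab by (simp add: eterm_pair p_def q_def algebra_simps)
  have "0 \<le> p * (M - q)" "0 \<le> q * (M - p)" using pq by auto
  moreover have "p * (M - q) \<le> M * M" "q * (M - p) \<le> M * M"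
    using pq by (auto intro!: mult_mono)
  ultimately show ?thesis unfolding e by (auto simp: power2_eq_square)
qed

lemma potential_eq:
  assumes "simple_graph Ed" "finite (Em Ed m)"
  shows "potential Ed M m = (\<Sum>e\<in>Em Ed m. eterm M m e)"
proof -
  have "potential Ed M m = infsum (eterm M m) (Em Ed m)"
    unfolding potential_def eterm_def[abs_def]
  proof (rule infsum_cong_neutral)
    fix e assume e: "e \<in> Ed - Em Ed m"
    then obtain a b where ab: "a \<noteq> b" "e = {a,b}" using edge2[OF assms(1)] by blast
    then show "real M / 2 * (\<Sum>x\<in>e. real (m x)) - (\<Prod>x\<in>e. real (m x)) = 0"
      using e by (auto simp: Em_def)
  qed (auto simp: Em_def)
  then show ?thesis using assms(2) by simp
qed

lemma cadj_sym: "cadj Ed m n \<Longrightarrow> cadj Ed n m"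
  unfolding cadj_def by (metis insert_commute)

lemma weight_sym: "weight M m n = weight M n m"
  unfolding weight_def
proof (rule prod.cong)
  fix x
  show "sqrt (real M / 2 * (real (m x) + real (n x) + 1) - real (m x) * real (n x))
     = sqrt (real M / 2 * (real (n x) + real (m x) + 1) - real (n x) * real (m x))"
    by (rule arg_cong[where f=sqrt]) (simp add: algebra_simps)
qed auto


lemma weight_mv:
  assumes "xp \<noteq> xm" "1 \<le> m xm" "m xp < M" "\<forall>x. m x \<le> M"
  shows "0 \<le> weight M m (mv m xp xm) \<and>
         weight M m (mv m xp xm) \<le> real M * real (m xm) * (real M - real (m xp))"
proof -
  define a where "a = real (m xm)"
  define b where "b = real (m xp)"
  have ab: "1 \<le> a" "a \<le> M" "0 \<le> b" "b + 1 \<le> M"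
    using assms by (auto simp: a_def b_def)
  have S: "{x. m x \<noteq> mv m xp xm x} = {xp, xm}"
    using assms by (auto simp: mv_def)
  have "weight M m (mv m xp xm) =
     sqrt (real M / 2 * (b + (b + 1) + 1) - b * (b + 1)) * sqrt (real M / 2 * (a + (a - 1) + 1) - a * (a - 1))"
    unfolding weight_def S using assms by (simp add: mv_def a_def b_def of_nat_diff)
  also have "\<dots> = sqrt ((a * (M - b)) * ((b + 1) * (M - a + 1)))"
    by (simp add: real_sqrt_mult[symmetric] algebra_simps)
  finally have w: "weight M m (mv m xp xm) = sqrt ((a * (M - b)) * ((b + 1) * (M - a + 1)))" .
  have "1 * 1 \<le> a * (M - b)" using ab by (intro mult_mono) auto
  then have p1: "1 \<le> a * (M - b)" by simp
  have p2: "0 \<le> (b + 1) * (M - a + 1)" using ab by auto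
  have p3: "(b + 1) * (M - a + 1) \<le> real M * real M" using ab by (intro mult_mono) auto
  have "(a * (M - b)) * ((b + 1) * (M - a + 1)) \<le> (a * (M - b)) * (real M * real M)"
    using p1 p3 by (intro mult_left_mono) auto
  also have "\<dots> \<le> (a * (M - b)) * (a * (M - b)) * (real M * real M)"
    using p1 by (intro mult_right_mono) (auto simp: mult_le_cancel_left1)
  finally have "sqrt ((a * (M - b)) * ((b + 1) * (M - a + 1))) \<le> sqrt ((M * a * (M - b))^2)"
    by (intro real_sqrt_le_mono) (simp add: power2_eq_square algebra_simps)
  also have "\<dots> = M * a * (M - b)" using ab by simp
  finally show ?thesis using w p1 p2 by (simp add: a_def b_def)
qed

lemma cadj_mv:
  assumes "cadj Ed n m" "n \<in> configs M N"
  obtains xp xm where "{xp, xm} \<in> Ed" "xp \<noteq> xm" "1 \<le> m xm" "m xp < M" "n = mv m xp xm"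
proof -
  obtain xp xm where h: "{xp, xm} \<in> Ed" "n xp = m xp + 1" "n xm + 1 = m xm"
      "\<forall>z. z \<noteq> xp \<and> z \<noteq> xm \<longrightarrow> n z = m z"
    using assms(1) unfolding cadj_def by blast
  have ne: "xp \<noteq> xm" using h by auto
  have "n xp \<le> M" using assms(2) by (auto simp: configs_def)
  then have "m xp < M" using h by simp
  moreover have "n = mv m xp xm" using h ne by (auto simp: mv_def fun_eq_iff)
  ultimately show ?thesis using that h ne by auto
qed

lemma ordp_pair: "a \<noteq> b \<Longrightarrow> ordp {a, b} = {(a, b), (b, a)}"
  by (auto simp: ordp_def)

lemma ordp_sum:
  assumes "simple_graph Ed" "e \<in> Ed" "\<forall>x. m x \<le> M"
  shows "(\<Sum>q\<in>ordp e. real M * real (m (snd q)) * (real M - real (m (fst q)))) = 2 * real M * eterm M m e"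
proof -
  obtain a b where ab: "a \<noteq> b" "e = {a,b}" using edge2[OF assms(1,2)] .
  show ?thesis using ab by (simp add: ordp_pair eterm_pair algebra_simps)
qed


lemma core:
  assumes sg: "simple_graph Ed" and fin: "finite (Em Ed m)" and m: "m \<in> configs M N"
    and NN: "NN \<subseteq> {n\<in>configs M N. cadj Ed n m}"
  shows "finite NN \<and> (\<Sum>n\<in>NN. weight M m n) \<le> 2 * real M * potential Ed M m
         \<and> (\<forall>n\<in>NN. 0 \<le> weight M m n)"
proof -
  have mM: "\<forall>x. m x \<le> M" using m by (auto simp: configs_def)
  define Q' where "Q' = (\<Union>e\<in>Em Ed m. ordp e)"
  define Q where "Q = {q\<in>Q'. 1 \<le> m (snd q) \<and> m (fst q) < M}"
  define \<psi> where "\<psi> q = mv m (fst q) (snd q)" for q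
  define g where "g q = real M * real (m (snd q)) * (real M - real (m (fst q)))" for q
  have finE: "\<And>e. e \<in> Em Ed m \<Longrightarrow> finite (ordp e)"
  proof -
    fix e assume "e \<in> Em Ed m"
    then obtain a b where "a \<noteq> b" "e = {a,b}" using edge2[OF sg] by (auto simp: Em_def)
    then show "finite (ordp e)" by (simp add: ordp_pair)
  qed
  have fQ': "finite Q'" unfolding Q'_def using fin finE by auto
  have fQ: "finite Q" unfolding Q_def using fQ' by auto
  have Qne: "\<And>q. q \<in> Q \<Longrightarrow> fst q \<noteq> snd q" by (auto simp: Q_def Q'_def ordp_def)
  have wQ: "\<And>q. q \<in> Q \<Longrightarrow> 0 \<le> weight M m (\<psi> q) \<and> weight M m (\<psi> q) \<le> g q"
  proof -
    fix q assume q: "q \<in> Q"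
    obtain a b where ab: "q = (a, b)" by (cases q)
    have "a \<noteq> b" "1 \<le> m b" "m a < M" using q Qne[OF q] ab by (auto simp: Q_def)
    from weight_mv[OF this mM] show "0 \<le> weight M m (\<psi> q) \<and> weight M m (\<psi> q) \<le> g q"
      by (simp add: ab \<psi>_def g_def)
  qed
  have gnn: "\<And>q. 0 \<le> g q" using mM unfolding g_def by (auto intro!: mult_nonneg_nonneg)
  have sub: "NN \<subseteq> \<psi> ` Q"
  proof
    fix n assume "n \<in> NN"
    then have n: "cadj Ed n m" "n \<in> configs M N" using NN by auto
    obtain xp xm where h: "{xp, xm} \<in> Ed" "xp \<noteq> xm" "1 \<le> m xm" "m xp < M" "n = mv m xp xm"
      using cadj_mv[OF n] .
    have "{xp, xm} \<in> Em Ed m" using h by (auto simp: Em_def)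
    then have "(xp, xm) \<in> Q" using h by (auto simp: Q_def Q'_def ordp_def)
    then show "n \<in> \<psi> ` Q" using h by (force simp: \<psi>_def intro: image_eqI[where x="(xp, xm)"])
  qed
  have fN: "finite NN" using sub fQ finite_subset by blast
  have nnN: "\<forall>n\<in>NN. 0 \<le> weight M m n" using sub wQ by auto
  have "(\<Sum>n\<in>NN. weight M m n) \<le> (\<Sum>n\<in>\<psi> ` Q. weight M m n)"
    by (rule sum_mono2) (use fQ sub wQ in auto)
  also have "\<dots> \<le> (\<Sum>q\<in>Q. weight M m (\<psi> q))"
    using sum_image_le[OF fQ, of "weight M m" \<psi>] wQ by (simp add: o_def)
  also have "\<dots> \<le> (\<Sum>q\<in>Q. g q)" by (rule sum_mono) (use wQ in auto)
  also have "\<dots> \<le> (\<Sum>q\<in>Q'. g q)" by (rule sum_mono2) (use fQ' gnn in \<open>auto simp: Q_def\<close>)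
  also have "\<dots> = (\<Sum>e\<in>Em Ed m. \<Sum>q\<in>ordp e. g q)"
    unfolding Q'_def
  proof (rule sum.UNION_disjoint[OF fin])
    show "\<forall>e\<in>Em Ed m. finite (ordp e)" using finE by auto
    show "\<forall>i\<in>Em Ed m. \<forall>j\<in>Em Ed m. i \<noteq> j \<longrightarrow> ordp i \<inter> ordp j = {}"
    proof (intro ballI impI)
      fix i j assume ij: "i \<in> Em Ed m" "j \<in> Em Ed m" "i \<noteq> j"
      obtain a b where ab: "a \<noteq> b" "i = {a,b}" using edge2[OF sg] ij by (auto simp: Em_def)
      obtain c d where cd: "c \<noteq> d" "j = {c,d}" using edge2[OF sg] ij by (auto simp: Em_def)
      show "ordp i \<inter> ordp j = {}" using ab cd ij(3) by (auto simp: ordp_pair)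
    qed
  qed
  also have "\<dots> = (\<Sum>e\<in>Em Ed m. 2 * real M * eterm M m e)"
    by (rule sum.cong) (use ordp_sum[OF sg _ mM] in \<open>auto simp: g_def Em_def\<close>)
  also have "\<dots> = 2 * real M * potential Ed M m"
    using potential_eq[OF sg fin] by (simp add: sum_distrib_left)
  finally show ?thesis using fN nnN by simp
qed


lemma cz: "cnj (z::complex) * z = complex_of_real ((cmod z)\<^sup>2)"
  by (simp only: cmod_power2 mult.commute[of "cnj z"] complex_mult_cnj)

lemma form_ineq_sub:
  assumes sg: "simple_graph Ed" and bd: "bounded_degree Ed" and V': "V' \<subseteq> configs M N"
  shows "form_ineq Ed M V'"
proof -
  obtain D where D: "\<And>m. m \<in> configs M N \<Longrightarrow> finite (Em Ed m) \<and> card (Em Ed m) \<le> N * D"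
    using Em_bound[OF bd] by blast
  define B where "B = real (N * D) * real M ^ 2"
  have potB: "0 \<le> potential Ed M m \<and> potential Ed M m \<le> B" if m: "m \<in> configs M N" for m
  proof -
    have mM: "\<forall>x. m x \<le> M" using m by (auto simp: configs_def)
    have fin: "finite (Em Ed m)" using D[OF m] by auto
    have eb: "\<And>e. e \<in> Em Ed m \<Longrightarrow> 0 \<le> eterm M m e \<and> eterm M m e \<le> real M ^ 2"
      using eterm_bounds[OF sg _ mM] by (auto simp: Em_def)
    have "(\<Sum>e\<in>Em Ed m. eterm M m e) \<le> (\<Sum>e\<in>Em Ed m. real M ^ 2)"
      by (rule sum_mono) (use eb in auto)
    also have "\<dots> = real (card (Em Ed m)) * real M ^ 2" by simp
    also have "\<dots> \<le> B"
    proof -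
      have "real (card (Em Ed m)) \<le> real (N * D)" using D[OF m] of_nat_le_iff by blast
      then show ?thesis unfolding B_def by (rule mult_right_mono) simp
    qed
    finally show ?thesis using potential_eq[OF sg fin] eb by (auto intro: sum_nonneg)
  qed
  have B0: "0 \<le> B" unfolding B_def by simp
  define NB where "NB m = {n\<in>V'. cadj Ed n m}" for m
  have coreV: "finite (NB m) \<and> (\<Sum>n\<in>NB m. weight M m n) \<le> 2 * real M * potential Ed M m
         \<and> (\<forall>n\<in>NB m. 0 \<le> weight M m n)" if m: "m \<in> V'" for m
    using core[OF sg _ _, of m M N "NB m"] D[of m] m V' by (auto simp: NB_def)
  define S where "S = Sigma V' NB"
  have sw: "bij_betw (\<lambda>p. (snd p, fst p)) S S"
    by (rule bij_betwI[where g="\<lambda>p. (snd p, fst p)"]) (auto simp: S_def NB_def intro: cadj_sym)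
  have wS: "\<And>p. p \<in> S \<Longrightarrow> 0 \<le> weight M (fst p) (snd p)"
    using coreV by (auto simp: S_def)
  show ?thesis unfolding form_ineq_def
  proof (intro allI impI)
    fix f :: "('a \<Rightarrow> nat) \<Rightarrow> complex"
    assume l2: "l2_on V' f"
    define F where "F m = (cmod (f m))\<^sup>2" for m
    have Fs: "F summable_on V'" using l2 by (simp add: l2_on_def F_def[abs_def])
    have F0: "\<And>m. 0 \<le> F m" by (simp add: F_def)
    define g1 where "g1 p = weight M (fst p) (snd p) * F (fst p)" for p
    define g2 where "g2 p = weight M (fst p) (snd p) * F (snd p)" for p
    define h where "h p = complex_of_real (weight M (fst p) (snd p)) * (cnj (f (fst p)) * f (snd p))" for p
    have BF: "(\<lambda>m. 2 * real M * B * F m) summable_on V'"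
      using Fs by (rule summable_on_cmult_right)
    have inner1: "infsum (\<lambda>n. g1 (m, n)) (NB m) = F m * (\<Sum>n\<in>NB m. weight M m n)" if "m \<in> V'" for m
      using coreV[OF that] by (simp add: g1_def sum_distrib_left mult.commute)
    have innerb: "0 \<le> F m * (\<Sum>n\<in>NB m. weight M m n) \<and> F m * (\<Sum>n\<in>NB m. weight M m n) \<le> 2 * real M * B * F m"
      if m: "m \<in> V'" for m
    proof -
      have "(\<Sum>n\<in>NB m. weight M m n) \<le> 2 * real M * B"
      proof -
        have p: "potential Ed M m \<le> B" using potB[of m] m V' by auto
        have "2 * real M * potential Ed M m \<le> 2 * real M * B" by (rule mult_left_mono[OF p]) simp
        then show ?thesis using coreV[OF m] by linarith
      qed
      moreover have "0 \<le> (\<Sum>n\<in>NB m. weight M m n)" using coreV[OF m] by (auto intro: sum_nonneg)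
      ultimately show ?thesis using F0[of m] by (auto simp: mult.commute intro: mult_left_mono)
    qed
    have g1s: "g1 summable_on S"
    proof -
      have "(\<lambda>zz. norm (g1 zz)) summable_on S" unfolding S_def
      proof (subst Infinite_Sum.abs_summable_on_Sigma_iff, intro conjI ballI)
        fix m assume "m \<in> V'"
        then show "(\<lambda>n. norm (g1 (m, n))) summable_on NB m" using coreV by auto
      next
        show "(\<lambda>m. norm (\<Sum>\<^sub>\<infinity>n\<in>NB m. norm (g1 (m, n)))) summable_on V'"
        proof (rule Infinite_Sum.abs_summable_on_comparison_test)
          show "(\<lambda>x. norm (2 * real M * B * F x)) summable_on V'"
            using BF by (rule summable_on_cong[THEN iffD1, rotated]) (use F0 B0 in simp)
          fix m assume m: "m \<in> V'"
          have "(\<Sum>\<^sub>\<infinity>n\<in>NB m. norm (g1 (m, n))) = infsum (\<lambda>n. g1 (m, n)) (NB m)"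
            by (rule infsum_cong) (use coreV[OF m] F0 in \<open>auto simp: g1_def\<close>)
          then show "norm (\<Sum>\<^sub>\<infinity>n\<in>NB m. norm (g1 (m, n))) \<le> norm (2 * real M * B * F m)"
            using inner1[OF m] innerb[OF m] abs_ge_self[of "2 * real M * B * F m"] by simp
        qed
      qed
      then show ?thesis by (rule abs_summable_summable)
    qed
    have g2eq: "g2 = (\<lambda>p. g1 (snd p, fst p))" by (auto simp: fun_eq_iff g1_def g2_def weight_sym)
    have g2s: "g2 summable_on S"
    proof -
      have "(\<lambda>p. g1 (snd p, fst p)) summable_on S"
        using summable_on_reindex_bij_betw[OF sw, of g1] g1s by simp
      then show ?thesis by (simp add: g2eq)
    qed
    have g12: "infsum g2 S = infsum g1 S"
      using infsum_reindex_bij_betw[OF sw, of g1] by (simp add: g2eq)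
    have hb: "norm (h p) \<le> (g1 p + g2 p) / 2" if p: "p \<in> S" for p
    proof -
      have "norm (h p) = weight M (fst p) (snd p) * (cmod (f (fst p)) * cmod (f (snd p)))"
        using wS[OF p] by (simp add: h_def norm_mult)
      also have "\<dots> \<le> weight M (fst p) (snd p) * ((F (fst p) + F (snd p)) / 2)"
      proof (rule mult_left_mono[OF _ wS[OF p]])
        have "0 \<le> (cmod (f (fst p)) - cmod (f (snd p)))\<^sup>2" by simp
        then show "cmod (f (fst p)) * cmod (f (snd p)) \<le> (F (fst p) + F (snd p)) / 2"
          by (simp add: F_def power2_eq_square algebra_simps)
      qed
      also have "\<dots> = (g1 p + g2 p) / 2" by (simp add: g1_def g2_def algebra_simps)
      finally show ?thesis .
    qed
    have hsum: "((\<lambda>p. (g1 p + g2 p) / 2) has_sum ((infsum g1 S + infsum g2 S) / 2)) S"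
      using has_sum_divide_const[OF has_sum_add[OF has_sum_infsum[OF g1s] has_sum_infsum[OF g2s]]] by simp
    have g12s: "(\<lambda>p. (g1 p + g2 p) / 2) summable_on S"
      using hsum by (rule has_sum_imp_summable)
    have hs: "h summable_on S"
    proof (rule abs_summable_summable, rule Infinite_Sum.abs_summable_on_comparison_test)
      have nn: "\<And>p. p \<in> S \<Longrightarrow> norm ((g1 p + g2 p) / 2) = (g1 p + g2 p) / 2"
        using wS F0 by (simp add: g1_def g2_def)
      show "(\<lambda>p. norm ((g1 p + g2 p) / 2)) summable_on S"
        using summable_on_cong[of S "\<lambda>p. norm ((g1 p + g2 p) / 2)", OF nn] g12s by simp
      fix p assume "p \<in> S"
      then show "norm (h p) \<le> norm ((g1 p + g2 p) / 2)" using hb by fastforce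
    qed
    define L where "L = infsum h S"
    have LHS: "(\<Sum>\<^sub>\<infinity>m\<in>V'. cnj (f m) * adj_op Ed M V' f m) = L"
    proof -
      have "(\<Sum>\<^sub>\<infinity>m\<in>V'. cnj (f m) * adj_op Ed M V' f m) = (\<Sum>\<^sub>\<infinity>m\<in>V'. \<Sum>\<^sub>\<infinity>n\<in>NB m. h (m, n))"
      proof (rule infsum_cong)
        fix m assume m: "m \<in> V'"
        have "adj_op Ed M V' f m = (\<Sum>n\<in>NB m. complex_of_real (weight M m n) * f n)"
          using coreV[OF m] by (simp add: adj_op_def NB_def)
        then show "cnj (f m) * adj_op Ed M V' f m = (\<Sum>\<^sub>\<infinity>n\<in>NB m. h (m, n))"
          using coreV[OF m] by (simp add: h_def sum_distrib_left algebra_simps)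
      qed
      also have "\<dots> = L" unfolding L_def S_def by (rule infsum_Sigma_banach) (use hs S_def in simp)
      finally show ?thesis .
    qed
    have ImL: "Im L = 0"
    proof -
      have "cnj L = infsum (\<lambda>p. cnj (h p)) S" by (simp add: L_def)
      also have "\<dots> = infsum (\<lambda>p. h (snd p, fst p)) S"
        by (rule infsum_cong) (simp add: h_def weight_sym)
      also have "\<dots> = L" unfolding L_def by (rule infsum_reindex_bij_betw[OF sw])
      finally have "Im (cnj L) = Im L" by simp
      then show ?thesis by simp
    qed
    have ReL: "Re L \<le> infsum g1 S"
    proof -
      have "Re L = infsum (\<lambda>p. Re (h p)) S" unfolding L_def by (rule infsum_Re[OF hs, symmetric])
      also have "\<dots> \<le> infsum (\<lambda>p. (g1 p + g2 p) / 2) S"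
      proof (rule infsum_mono[OF summable_on_Re[OF hs] g12s])
        fix p assume "p \<in> S"
        then show "Re (h p) \<le> (g1 p + g2 p) / 2" using hb complex_Re_le_cmod order_trans by blast
      qed
      also have "\<dots> = (infsum g1 S + infsum g2 S) / 2"
        using hsum by (rule infsumI)
      also have "\<dots> = infsum g1 S" using g12 by simp
      finally show ?thesis .
    qed
    define P where "P m = potential Ed M m * F m" for m
    have Ps: "P summable_on V'"
    proof (rule summable_on_comparison_test[OF summable_on_cmult_right[OF Fs, of B]])
      fix m assume m: "m \<in> V'"
      then show "P m \<le> B * F m" "0 \<le> P m" using potB[of m] V' F0[of m]
        by (auto simp: P_def intro: mult_right_mono)
    qed
    have g1le: "infsum g1 S \<le> 2 * real M * infsum P V'"
    proof -
      have "infsum g1 S = (\<Sum>\<^sub>\<infinity>m\<in>V'. \<Sum>\<^sub>\<infinity>n\<in>NB m. g1 (m, n))"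
        unfolding S_def by (rule infsum_Sigma_banach[symmetric]) (use g1s S_def in simp)
      also have "\<dots> = (\<Sum>\<^sub>\<infinity>m\<in>V'. F m * (\<Sum>n\<in>NB m. weight M m n))"
        by (rule infsum_cong) (rule inner1)
      also have "\<dots> \<le> (\<Sum>\<^sub>\<infinity>m\<in>V'. 2 * real M * P m)"
      proof (rule infsum_mono)
        show "(\<lambda>m. F m * (\<Sum>n\<in>NB m. weight M m n)) summable_on V'"
          by (rule summable_on_comparison_test[OF BF]) (use innerb in auto)
        show "(\<lambda>m. 2 * real M * P m) summable_on V'" using Ps by (rule summable_on_cmult_right)
        fix m assume m: "m \<in> V'"
        show "F m * (\<Sum>n\<in>NB m. weight M m n) \<le> 2 * real M * P m"
        proof -
          have "F m * (\<Sum>n\<in>NB m. weight M m n) \<le> F m * (2 * real M * potential Ed M m)"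
            using coreV[OF m] F0[of m] by (intro mult_left_mono) auto
          then show ?thesis unfolding P_def by (simp add: ac_simps)
        qed
      qed
      also have "\<dots> = 2 * real M * infsum P V'" by (rule infsum_cmult_right) (use Ps in simp)
      finally show ?thesis .
    qed
    have RHS: "(\<Sum>\<^sub>\<infinity>m\<in>V'. complex_of_real (potential Ed M m) * cnj (f m) * f m) = complex_of_real (infsum P V')"
    proof -
      have "(\<Sum>\<^sub>\<infinity>m\<in>V'. complex_of_real (potential Ed M m) * cnj (f m) * f m)
          = (\<Sum>\<^sub>\<infinity>m\<in>V'. complex_of_real (P m))"
        by (rule infsum_cong) (simp only: P_def F_def mult.assoc cz of_real_mult)
      also have "\<dots> = complex_of_real (infsum P V')"
      proof (rule infsumI)
        show "((\<lambda>m. complex_of_real (P m)) has_sum complex_of_real (infsum P V')) V'"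
          by (subst has_sum_of_real_iff) (rule has_sum_infsum[OF Ps])
      qed
      finally show ?thesis .
    qed
    have "L = complex_of_real (Re L)" using ImL by (simp add: complex_eq_iff)
    moreover have "Re L \<le> 2 * real M * infsum P V'" using ReL g1le by linarith
    ultimately show "(\<Sum>\<^sub>\<infinity>m\<in>V'. cnj (f m) * adj_op Ed M V' f m)
       \<le> complex_of_real (2 * real M) * (\<Sum>\<^sub>\<infinity>m\<in>V'. complex_of_real (potential Ed M m) * cnj (f m) * f m)"
      unfolding LHS RHS using ImL by (simp add: less_eq_complex_def)
  qed
qed


theorem mainTheorem3:
  fixes Ed :: "('v::countable) set set" and M N :: nat
  assumes "simple_graph Ed"
    and "graph_connected Ed"
    and "bounded_degree Ed"
  shows "form_ineq Ed M (configs M N)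
    \<and> (\<forall>V' \<subseteq> configs M N. form_ineq Ed M V')"
  using form_ineq_sub[OF assms(1) assms(3)] by blast

end
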